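(* For integers $N\ge 2$ and $n\ge 1$, $$B_{N,n}=\frac{N}{N+n}\left\{B_{N-1,n}+\sum_{m=1}^{n-1}\binom{n}{n-m+1}B_{N,m}B_{N-1,n-m+1}\right\}.$$
   Context: For a positive integer $N$, the hypergeometric Bernoulli numbers $B_{N,n}$ ($n\ge 0$) are defined by $$\frac{x^N/N!}{e^x-\sum_{n=0}^{N-1}x^n/n!}=\sum_{n=0}^\infty B_{N,n}\frac{x^n}{n!}.$$ *)

theory Defs
  imports Complex_Main "HOL-Computational_Algebra.Formal_Power_Series"
begin

text \<open>The FPS division shifts by the subdegree (= N) of the denominator, as in the paper.\<close>

definition hyp_bernoulli_fps :: "nat \<Rightarrow> real fps" where
  "hyp_bernoulli_fps N =
     (fps_const (1 / fact N) * fps_X ^ N) /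
     (fps_exp 1 - Abs_fps (\<lambda>k. if k < N then 1 / fact k else 0))"

definition hyp_bernoulli :: "nat \<Rightarrow> nat \<Rightarrow> real" where
  "hyp_bernoulli N n = fact n * fps_nth (hyp_bernoulli_fps N) n"

end

theory Submission
  imports Defs
begin
unbundle fps_syntax

lemma alg: fixes u v a b d e x n p q :: "'a::comm_ring_1"
  assumes h1: "u*a = 1" and h2: "v*b = 1" and h3: "d*a + u*e = 0" and h4: "e*x + n*a = b" and h5: "b = q + x*a" and h6: "q = n*p"
  shows "p*u - q*v = p*d*(q*v - 1)"
proof -
  have L: "p*u - q*v = u*v*(p*b - q*a)"
  proof -
    have "p*u - q*v = p*u*(v*b) - q*v*(u*a)" using h1 h2 by simp
    then show ?thesis by (simp add: algebra_simps)
  qed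
  have dd: "d = - (u*u*e)"
  proof -
    have "d = d*(a*u)" using h1 by (simp add: mult.commute)
    also have "\<dots> = (d*a)*u" by (simp add: mult.assoc)
    also have "\<dots> = - (u*u*e)" using h3 by (simp add: eq_neg_iff_add_eq_0[symmetric] algebra_simps)
    finally show ?thesis .
  qed
  have R: "q*v - 1 = - (v*x*a)"
  proof -
    have "q*v - 1 = q*v - v*b" using h2 by simp
    then show ?thesis using h5 by (simp add: algebra_simps)
  qed
  have "p*b - q*a = p*e*x" using h4 h6 by (simp add: algebra_simps flip: h4)
  show ?thesis unfolding L dd R
    using `p*b - q*a = p*e*x` h1
    by (simp add: algebra_simps) (metis mult.assoc mult.left_commute mult_1_right)
qed

definition GG :: "nat \<Rightarrow> real fps" where
  "GG N = Abs_fps (\<lambda>k. 1 / fact (k + N))"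

lemma GG0: "GG N $ 0 \<noteq> 0" by (simp add: GG_def)

lemma denom_eq: "fps_exp 1 - Abs_fps (\<lambda>k. if k < N then 1 / fact k else 0) = fps_X ^ N * GG N"
  by (rule fps_ext) (auto simp: GG_def fps_X_power_mult_nth)

lemma fps_eq: "hyp_bernoulli_fps N = fps_const (1 / fact N) * inverse (GG N)"
proof -
  have "hyp_bernoulli_fps N = (fps_const (1/fact N) * fps_X ^ N) / (GG N * fps_X ^ N)"
    unfolding hyp_bernoulli_fps_def denom_eq by (simp add: mult.commute)
  also have "\<dots> = fps_const (1/fact N) / GG N"
    by (rule fps_divide_cancel) simp
  also have "\<dots> = fps_const (1 / fact N) * inverse (GG N)"
    by (simp add: fps_divide_unit GG0)
  finally show ?thesis .
qed

lemma GG_deriv: "fps_deriv (GG (Suc M)) * fps_X + of_nat (Suc M) * GG (Suc M) = GG M"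
proof (rule fps_ext)
  fix k
  show "(fps_deriv (GG (Suc M)) * fps_X + of_nat (Suc M) * GG (Suc M)) $ k = GG M $ k"
  proof (cases k)
    case 0
    have "fact (Suc M) = real (Suc M) * (fact M :: real)" by simp
    have p: "(0::real) < fact M + fact M * real M" by (simp add: add_pos_nonneg)
    have "fact M / (fact M + fact M * real M) + fact M * real M / (fact M + fact M * real M) = (1::real)"
      using p by (simp add: add_divide_distrib[symmetric])
    then show ?thesis using 0 by (simp add: GG_def fps_of_nat field_simps)
  next
    case (Suc j)
    have e: "fact (Suc j + Suc M) = real (Suc j + Suc M) * (fact (Suc j + M) :: real)"
      by (metis add_Suc_right fact_Suc)
    have "(fps_deriv (GG (Suc M)) * fps_X + of_nat (Suc M) * GG (Suc M)) $ k
      = real (j + 1) / fact (Suc j + Suc M) + real (Suc M) / fact (Suc j + Suc M)"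
      using Suc by (simp add: GG_def fps_of_nat[symmetric] del: of_nat_Suc fact_Suc)
    also have "\<dots> = real (Suc j + Suc M) / fact (Suc j + Suc M)"
      by (simp add: add_divide_distrib[symmetric] del: fact_Suc)
    also have "\<dots> = 1 / fact (Suc j + M)" unfolding e
      by (simp del: fact_Suc of_nat_add add: divide_divide_eq_left'[symmetric])
    also have "\<dots> = GG M $ k" using Suc by (simp add: GG_def)
    finally show ?thesis .
  qed
qed

lemma GG_shift: "GG M = fps_const (1 / fact M) + fps_X * GG (Suc M)"
  by (rule fps_ext) (case_tac n; simp add: GG_def fps_X_mult_nth)


lemma fact_aux:
  "fact M / (fact M + fact M * real M) = 1 / (1 + real M)"
  "(1 + real M) / (fact M + fact M * real M) = 1 / fact M"
proof -
  have e: "fact M + fact M * real M = fact M * (1 + real M)" by (simp add: algebra_simps)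
  have "1 + real M \<noteq> 0" by linarith
  then show "fact M / (fact M + fact M * real M) = 1 / (1 + real M)"
    "(1 + real M) / (fact M + fact M * real M) = 1 / fact M" unfolding e by simp_all
qed

lemma key:
  "hyp_bernoulli_fps (Suc M) - hyp_bernoulli_fps M
     = fps_deriv (hyp_bernoulli_fps (Suc M)) * (hyp_bernoulli_fps M - 1)"
proof -
  let ?a = "GG (Suc M)" and ?b = "GG M"
  let ?p = "fps_const (1 / fact (Suc M)) :: real fps" and ?q = "fps_const (1 / fact M) :: real fps"
  have h1: "inverse ?a * ?a = 1" by (rule inverse_mult_eq_1) (rule GG0)
  have h2: "inverse ?b * ?b = 1" by (rule inverse_mult_eq_1) (rule GG0)
  have h3: "fps_deriv (inverse ?a) * ?a + inverse ?a * fps_deriv ?a = 0"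
  proof -
    have "fps_deriv (inverse ?a * ?a) = 0" using h1 by simp
    then show ?thesis by (simp add: algebra_simps)
  qed
  have h4: "fps_deriv ?a * fps_X + of_nat (Suc M) * ?a = ?b" by (rule GG_deriv)
  have h5: "?b = ?q + fps_X * ?a" by (rule GG_shift)
  have h6: "?q = of_nat (Suc M) * ?p"
    by (simp add: fps_of_nat[symmetric] fps_const_mult[symmetric] del: of_nat_Suc fact_Suc)
       (simp add: field_simps fact_aux)
  have "?p * inverse ?a - ?q * inverse ?b = ?p * fps_deriv (inverse ?a) * (?q * inverse ?b - 1)"
    by (rule alg[OF h1 h2 h3 h4 h5 h6])
  then show ?thesis by (simp add: fps_eq mult.assoc del: fact_Suc)
qed

lemma h01:
  "hyp_bernoulli_fps M $ 0 = 1" "hyp_bernoulli_fps M $ 1 = - 1 / real (Suc M)"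
proof -
  let ?b = "GG M"
  have e: "hyp_bernoulli_fps M * ?b = fps_const (1 / fact M)"
    by (simp add: fps_eq mult.assoc inverse_mult_eq_1 GG0)
  have "(hyp_bernoulli_fps M * ?b) $ 0 = 1 / fact M" unfolding e by simp
  then show z: "hyp_bernoulli_fps M $ 0 = 1" by (simp add: GG_def)
  have "(hyp_bernoulli_fps M * ?b) $ 1 = 0" unfolding e by simp
  then have "1 / fact (Suc M) + hyp_bernoulli_fps M $ 1 / fact M = 0"
    using z by (simp add: GG_def fps_mult_nth_1 del: fact_Suc)
  then have "hyp_bernoulli_fps M $ 1 = - (fact M / fact (Suc M))"
    by (simp add: field_simps del: fact_Suc)
  also have "fact M / fact (Suc M) = (1::real) / real (Suc M)" by simp
  finally show "hyp_bernoulli_fps M $ 1 = - 1 / real (Suc M)" by simp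
qed


lemma coeff:
  "hyp_bernoulli (Suc M) n - hyp_bernoulli M n =
     (\<Sum>i<n. real (n choose i) * hyp_bernoulli (Suc M) (Suc i) * hyp_bernoulli M (n - i))"
proof -
  let ?f = "hyp_bernoulli_fps (Suc M)" and ?h = "hyp_bernoulli_fps M"
  have "?f $ n - ?h $ n = (fps_deriv ?f * (?h - 1)) $ n" using key[of M] by (metis fps_sub_nth)
  also have "\<dots> = (\<Sum>i=0..n. fps_deriv ?f $ i * (?h - 1) $ (n - i))" by (rule fps_mult_nth)
  also have "\<dots> = (\<Sum>i<n. fps_deriv ?f $ i * (?h - 1) $ (n - i))"
    using h01(1)[of M] by (simp add: atLeast0AtMost lessThan_Suc_atMost[symmetric])
  also have "\<dots> = (\<Sum>i<n. real (Suc i) * ?f $ Suc i * ?h $ (n - i))"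
    by (rule sum.cong) auto
  finally have E: "?f $ n - ?h $ n = (\<Sum>i<n. real (Suc i) * ?f $ Suc i * ?h $ (n - i))" .
  have "hyp_bernoulli (Suc M) n - hyp_bernoulli M n = fact n * (?f $ n - ?h $ n)"
    by (simp add: hyp_bernoulli_def algebra_simps)
  also have "\<dots> = (\<Sum>i<n. fact n * (real (Suc i) * ?f $ Suc i * ?h $ (n - i)))"
    unfolding E by (simp add: sum_distrib_left)
  also have "\<dots> = (\<Sum>i<n. real (n choose i) * hyp_bernoulli (Suc M) (Suc i) * hyp_bernoulli M (n - i))"
  proof (rule sum.cong)
    fix i assume "i \<in> {..<n}"
    then have "i \<le> n" by simp
    have "real (n choose i) * hyp_bernoulli (Suc M) (Suc i) * hyp_bernoulli M (n - i)
      = fact n / (fact i * fact (n - i)) * (real (Suc i) * fact i * ?f $ Suc i) * (fact (n - i) * ?h $ (n - i))"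
      by (simp add: binomial_fact[OF \<open>i \<le> n\<close>] hyp_bernoulli_def)
    also have "\<dots> = fact n * (real (Suc i) * ?f $ Suc i * ?h $ (n - i))"
      by (simp add: field_simps)
    finally show "fact n * (real (Suc i) * ?f $ Suc i * ?h $ (n - i)) =
      real (n choose i) * hyp_bernoulli (Suc M) (Suc i) * hyp_bernoulli M (n - i)" by simp
  qed simp
  finally show ?thesis .
qed


theorem lemma2:
  fixes N n :: nat
  assumes "N \<ge> 2" and "n \<ge> 1"
  shows "hyp_bernoulli N n =
           real N / real (N + n) *
           (hyp_bernoulli (N - 1) n +
            (\<Sum>m = 1..n - 1. real (n choose (n - m + 1)) * hyp_bernoulli N m
                                * hyp_bernoulli (N - 1) (n - m + 1)))"
proof -
  obtain M where NM: "N = Suc M" using assms(1) by (cases N) auto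
  obtain k where nk: "n = Suc k" using assms(2) by (cases n) auto
  let ?X = "hyp_bernoulli (Suc M) (Suc k)" and ?Y = "hyp_bernoulli M (Suc k)"
  let ?g = "\<lambda>i. real (Suc k choose i) * hyp_bernoulli (Suc M) (Suc i) * hyp_bernoulli M (Suc k - i)"
  define S where "S = (\<Sum>m = 1..k. real (Suc k choose (Suc k - m + 1)) * hyp_bernoulli (Suc M) m
                                * hyp_bernoulli M (Suc k - m + 1))"
  have S: "S = (\<Sum>i<k. ?g i)"
  proof -
    have "S = (\<Sum>i<k. real (Suc k choose (Suc k - Suc i + 1)) * hyp_bernoulli (Suc M) (Suc i)
                                * hyp_bernoulli M (Suc k - Suc i + 1))"
      unfolding S_def using sum.atLeast1_atMost_eq[of "\<lambda>m. real (Suc k choose (Suc k - m + 1)) * hyp_bernoulli (Suc M) m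
                                * hyp_bernoulli M (Suc k - m + 1)" k]
      by simp
    also have "\<dots> = (\<Sum>i<k. ?g i)"
    proof (rule sum.cong)
      fix i assume "i \<in> {..<k}"
      then have i: "i < k" by simp
      have a: "Suc k - Suc i + 1 = Suc k - i" using i by simp
      show "real (Suc k choose (Suc k - Suc i + 1)) * hyp_bernoulli (Suc M) (Suc i) * hyp_bernoulli M (Suc k - Suc i + 1) = ?g i"
        unfolding a using i by (simp add: binomial_symmetric[symmetric])
    qed simp
    finally show ?thesis .
  qed
  have h1: "hyp_bernoulli M 1 = - 1 / real (Suc M)"
    using h01(2)[of M] by (simp add: hyp_bernoulli_def)
  have gk: "?g k = - (real (Suc k) / real (Suc M) * ?X)"
    using h1 by simp
  have "?X - ?Y = S + ?g k" using coeff[of M "Suc k"] S by simp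
  then have "?X - ?Y = S - real (Suc k) / real (Suc M) * ?X" using gk by linarith
  then have "?X * (real (Suc M) + real (Suc k)) = real (Suc M) * (?Y + S)"
    by (simp add: field_simps)
  then have X: "?X = real (Suc M) / real (Suc M + Suc k) * (?Y + S)"
    by (simp add: field_simps)
  show ?thesis using X unfolding NM nk S_def by simp
qed

end
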